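(* Let $\mu$ be a compactly supported finite positive Borel measure on $\mathbb{R}^{2d}=\mathbb{R}^d\times\mathbb{R}^d$ such that the pushforward measure $\mu_{(-)}$ on $\mathbb{R}^d$ is absolutely continuous with respect to Lebesgue measure with density $\frac{d\mu_{(-)}}{dt}\in L^\infty(\mathbb{R}^d)$. Then $T_\mu\colon L^1(\mathbb{R}^d)\times L^1(\mathbb{R}^d)\to L^1(\mathbb{R}^d)$, and consequently $T_\mu\colon L^1(\mathbb{R}^d)\times L^1(\mathbb{R}^d)\to L^s(\mathbb{R}^d)$ for every $s\in[\frac12,1]$. Moreover, if $1\le p<q<\infty$ and the linear operator $T_{\mu_{(-)}}$ is bounded $L^p(\mathbb{R}^d)\to L^q(\mathbb{R}^d)$, then $T_\mu\colon L^{q'}(\mathbb{R}^d)\times L^p(\mathbb{R}^d)\to L^1(\mathbb{R}^d)$, and consequently $T_\mu\colon L^{q'}(\mathbb{R}^d)\times L^p(\mathbb{R}^d)\to L^s(\mathbb{R}^d)$ for every $s\in\left[\frac{pq'}{p+q'},1\right]$, where $q'$ is the conjugate exponent of $q$.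
   Context: The pushforward measure is $\mu_{(-)}(A):=\int_{\mathbb{R}^{2d}}1_A(y-z)\,d\mu(y,z)$ for Borel $A\subseteq\mathbb{R}^d$. The bilinear operator associated to $\mu$ is $T_\mu(f,g)(x)=\int_{\mathbb{R}^{2d}} f(x-y)\,g(x-z)\,d\mu(y,z)$, and the linear operator associated to $\mu_{(-)}$ is $T_{\mu_{(-)}}(g)(x)=\int_{\mathbb{R}^d} g(x-t)\,d\mu_{(-)}(t)$. "$T_\mu\colon L^a\times L^b\to L^c$" means there is a constant $C$ with $\|T_\mu(f,g)\|_{L^c}\le C\|f\|_{L^a}\|g\|_{L^b}$ for all $f\in L^a$, $g\in L^b$. *)

theory Defs
  imports "HOL-Analysis.Analysis"
begin

definition memLp :: "real \<Rightarrow> ('a::euclidean_space \<Rightarrow> real) \<Rightarrow> bool" where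
  "memLp p f \<longleftrightarrow> f \<in> borel_measurable lborel \<and> integrable lborel (\<lambda>x. \<bar>f x\<bar> powr p)"

definition lp_norm :: "real \<Rightarrow> ('a::euclidean_space \<Rightarrow> real) \<Rightarrow> real" where
  "lp_norm p f = (\<integral>x. \<bar>f x\<bar> powr p \<partial>lborel) powr (1 / p)"

definition T_bil :: "('a::euclidean_space \<times> 'a) measure \<Rightarrow> ('a \<Rightarrow> real) \<Rightarrow> ('a \<Rightarrow> real) \<Rightarrow> 'a \<Rightarrow> real" where
  "T_bil \<mu> f g x = (\<integral>yz. f (x - fst yz) * g (x - snd yz) \<partial>\<mu>)"

definition T_lin :: "'a::euclidean_space measure \<Rightarrow> ('a \<Rightarrow> real) \<Rightarrow> 'a \<Rightarrow> real" where
  "T_lin \<nu> g x = (\<integral>t. g (x - t) \<partial>\<nu>)"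

definition push_minus :: "('a::euclidean_space \<times> 'a) measure \<Rightarrow> 'a measure" where
  "push_minus \<mu> = distr \<mu> lborel (\<lambda>yz. fst yz - snd yz)"

definition bil_bounded :: "('a::euclidean_space \<times> 'a) measure \<Rightarrow> real \<Rightarrow> real \<Rightarrow> real \<Rightarrow> bool" where
  "bil_bounded \<mu> a b c \<longleftrightarrow> (\<exists>C. \<forall>f g. memLp a f \<longrightarrow> memLp b g \<longrightarrow>
      (AE x in lborel. integrable \<mu> (\<lambda>yz. f (x - fst yz) * g (x - snd yz))) \<and>
      memLp c (T_bil \<mu> f g) \<and>
      lp_norm c (T_bil \<mu> f g) \<le> C * lp_norm a f * lp_norm b g)"

definition lin_bounded :: "'a::euclidean_space measure \<Rightarrow> real \<Rightarrow> real \<Rightarrow> bool" where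
  "lin_bounded \<nu> p q \<longleftrightarrow> (\<exists>C. \<forall>g. memLp p g \<longrightarrow>
      (AE x in lborel. integrable \<nu> (\<lambda>t. g (x - t))) \<and>
      memLp q (T_lin \<nu> g) \<and>
      lp_norm q (T_lin \<nu> g) \<le> C * lp_norm p g)"

end

theory Submission
  imports Defs
begin


lemma holder_nn:
  fixes F G :: "'a::euclidean_space \<Rightarrow> real"
  assumes a: "a > 1" and b: "b > 1" and ab: "1/a + 1/b = 1"
    and F: "memLp a F" and G: "memLp b G" and F0: "\<And>x. 0 \<le> F x" and G0: "\<And>x. 0 \<le> G x"
  shows "(\<integral>\<^sup>+x. ennreal (F x * G x) \<partial>lborel) \<le> ennreal (lp_norm a F * lp_norm b G)"
proof -
  have Fm[measurable]: "F \<in> borel_measurable borel" and IF: "integrable lborel (\<lambda>x. F x powr a)"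
    using F F0 by (auto simp: memLp_def)
  have Gm[measurable]: "G \<in> borel_measurable borel" and IG: "integrable lborel (\<lambda>x. G x powr b)"
    using G G0 by (auto simp: memLp_def)
  define IA where "IA = (\<integral>x. F x powr a \<partial>lborel)"
  define IB where "IB = (\<integral>x. G x powr b \<partial>lborel)"
  have nA: "lp_norm a F = IA powr (1/a)" using F0 by (simp add: lp_norm_def IA_def)
  have nB: "lp_norm b G = IB powr (1/b)" using G0 by (simp add: lp_norm_def IB_def)
  have IA0: "IA \<ge> 0" unfolding IA_def by (intro Bochner_Integration.integral_nonneg) auto
  have IB0: "IB \<ge> 0" unfolding IB_def by (intro Bochner_Integration.integral_nonneg) auto
  show ?thesis
  proof (cases "IA = 0 \<or> IB = 0")
    case True
    have "AE x in lborel. F x * G x = 0"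
    proof (cases "IA = 0")
      case True
      then have "AE x in lborel. F x powr a = 0"
        using integral_nonneg_eq_0_iff_AE[OF IF] unfolding IA_def by auto
      then show ?thesis by eventually_elim simp
    next
      case False
      then have "IB = 0" using \<open>IA = 0 \<or> IB = 0\<close> by auto
      then have "AE x in lborel. G x powr b = 0"
        using integral_nonneg_eq_0_iff_AE[OF IG] unfolding IB_def by auto
      then show ?thesis by eventually_elim simp
    qed
    then have "AE x in lborel. ennreal (F x * G x) = 0" by eventually_elim auto
    then have "(\<integral>\<^sup>+x. ennreal (F x * G x) \<partial>lborel) = (\<integral>\<^sup>+x. 0 \<partial>(lborel::'a measure))"
      by (rule nn_integral_cong_AE)
    then show ?thesis by simp
  next
    case False
    then have IAp: "IA > 0" and IBp: "IB > 0" using IA0 IB0 by auto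
    define NA where "NA = IA powr (1/a)"
    define NB where "NB = IB powr (1/b)"
    have NAp: "NA > 0" and NBp: "NB > 0" using IAp IBp by (auto simp: NA_def NB_def)
    have NAa: "NA powr a = IA" using IAp a by (simp add: NA_def powr_powr)
    have NBb: "NB powr b = IB" using IBp b by (simp add: NB_def powr_powr)
    define H where "H x = NA * NB * (F x powr a / (a * IA) + G x powr b / (b * IB))" for x
    have pt: "F x * G x \<le> H x" for x
    proof -
      have "(F x / NA) * (G x / NB) \<le> (F x / NA) powr a / a + (G x / NB) powr b / b"
        by (rule Youngs_inequality) (use a b ab F0 G0 NAp NBp in auto)
      also have "\<dots> = F x powr a / (a * IA) + G x powr b / (b * IB)"
        using F0 G0 NAp NBp NAa NBb by (simp add: powr_divide mult.commute)
      finally show ?thesis using NAp NBp unfolding H_def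
        by (simp add: field_simps)
    qed
    have IH: "integrable lborel H" unfolding H_def using IF IG by auto
    have "(\<integral>x. H x \<partial>lborel) = NA * NB * ((\<integral>x. F x powr a \<partial>lborel) / (a * IA) + (\<integral>x. G x powr b \<partial>lborel) / (b * IB))"
      unfolding H_def using IF IG by simp
    also have "\<dots> = NA * NB" using IAp IBp ab by (simp add: IA_def[symmetric] IB_def[symmetric])
    finally have intH: "(\<integral>x. H x \<partial>lborel) = NA * NB" .
    have "(\<integral>\<^sup>+x. ennreal (F x * G x) \<partial>lborel) \<le> (\<integral>\<^sup>+x. ennreal (H x) \<partial>lborel)"
      by (intro nn_integral_mono ennreal_leI pt)
    also have "\<dots> = ennreal (NA * NB)"
    proof -
      have "0 \<le> H x" for x using pt[of x] F0[of x] G0[of x] by (meson mult_nonneg_nonneg order_trans)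
      then show ?thesis by (subst nn_integral_eq_integral[OF IH]) (auto simp: intH)
    qed
    finally show ?thesis by (simp add: nA nB NA_def NB_def)
  qed
qed



lemma nn_translate:
  fixes f :: "'a::euclidean_space \<Rightarrow> ennreal"
  assumes [measurable]: "f \<in> borel_measurable borel"
  shows "(\<integral>\<^sup>+x. f (x + c) \<partial>lborel) = (\<integral>\<^sup>+x. f x \<partial>lborel)"
proof -
  have "(\<integral>\<^sup>+x. f x \<partial>lborel) = (\<integral>\<^sup>+x. f x \<partial>(distr lborel borel ((+) c)))"
    by (simp add: lborel_distr_plus)
  also have "\<dots> = (\<integral>\<^sup>+x. f (c + x) \<partial>lborel)"
    by (subst nn_integral_distr) auto
  finally show ?thesis by (simp add: add.commute)
qed

lemma sets_mu: 
  fixes \<mu> :: "('a::euclidean_space \<times> 'a) measure"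
  assumes "sets \<mu> = sets borel"
  shows "sets \<mu> = sets (lborel \<Otimes>\<^sub>M (lborel::'a measure))"
  by (simp only: lborel_prod sets_lborel assms)

lemma shift:
  fixes \<mu> :: "('a::euclidean_space \<times> 'a) measure" and F G :: "'a \<Rightarrow> ennreal"
  assumes borel: "sets \<mu> = sets borel" and fin: "finite_measure \<mu>"
    and [measurable]: "F \<in> borel_measurable borel" "G \<in> borel_measurable borel"
  shows "(\<integral>\<^sup>+x. (\<integral>\<^sup>+yz. F (x - fst yz) * G (x - snd yz) \<partial>\<mu>) \<partial>lborel)
       = (\<integral>\<^sup>+w. F w * (\<integral>\<^sup>+t. G (w + t) \<partial>push_minus \<mu>) \<partial>lborel)"
proof -
  interpret finite_measure \<mu> by fact
  interpret P: pair_sigma_finite lborel \<mu> ..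
  have S: "sets \<mu> = sets (lborel \<Otimes>\<^sub>M (lborel::'a measure))" using sets_mu[OF borel] .
  have m1: "(\<lambda>(x, yz). F (x - fst yz) * G (x - snd yz)) \<in> borel_measurable (lborel \<Otimes>\<^sub>M \<mu>)"
    by (subst measurable_cong_sets[OF sets_pair_measure_cong[OF refl S] refl]) measurable
  have m2: "(\<lambda>(w, yz). F w * G (w + (fst yz - snd yz))) \<in> borel_measurable (lborel \<Otimes>\<^sub>M \<mu>)"
    by (subst measurable_cong_sets[OF sets_pair_measure_cong[OF refl S] refl]) measurable
  have md: "(\<lambda>yz. fst yz - snd yz) \<in> \<mu> \<rightarrow>\<^sub>M (lborel::'a measure)"
    by (subst measurable_cong_sets[OF S refl]) measurable
  have "(\<integral>\<^sup>+x. (\<integral>\<^sup>+yz. F (x - fst yz) * G (x - snd yz) \<partial>\<mu>) \<partial>lborel)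
      = (\<integral>\<^sup>+yz. (\<integral>\<^sup>+x. F (x - fst yz) * G (x - snd yz) \<partial>lborel) \<partial>\<mu>)"
    using P.Fubini'[OF m1] by simp
  also have "\<dots> = (\<integral>\<^sup>+yz. (\<integral>\<^sup>+w. F w * G (w + (fst yz - snd yz)) \<partial>lborel) \<partial>\<mu>)"
  proof (rule nn_integral_cong)
    fix yz :: "'a \<times> 'a"
    have "(\<integral>\<^sup>+x. F (x - fst yz) * G (x - snd yz) \<partial>lborel) = (\<integral>\<^sup>+w. F (w + fst yz - fst yz) * G (w + fst yz - snd yz) \<partial>lborel)"
      by (rule nn_translate[of "\<lambda>x. F (x - fst yz) * G (x - snd yz)" "fst yz", symmetric]) measurable
    then show "(\<integral>\<^sup>+x. F (x - fst yz) * G (x - snd yz) \<partial>lborel) = (\<integral>\<^sup>+w. F w * G (w + (fst yz - snd yz)) \<partial>lborel)"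
      by (simp add: algebra_simps)
  qed
  also have "\<dots> = (\<integral>\<^sup>+w. (\<integral>\<^sup>+yz. F w * G (w + (fst yz - snd yz)) \<partial>\<mu>) \<partial>lborel)"
    using P.Fubini'[OF m2] by simp
  also have "\<dots> = (\<integral>\<^sup>+w. F w * (\<integral>\<^sup>+yz. G (w + (fst yz - snd yz)) \<partial>\<mu>) \<partial>lborel)"
  proof (rule nn_integral_cong)
    fix w :: 'a
    have "(\<lambda>yz. G (w + (fst yz - snd yz))) \<in> borel_measurable \<mu>"
      by (subst measurable_cong_sets[OF S refl]) measurable
    then show "(\<integral>\<^sup>+yz. F w * G (w + (fst yz - snd yz)) \<partial>\<mu>) = F w * (\<integral>\<^sup>+yz. G (w + (fst yz - snd yz)) \<partial>\<mu>)"
      by (rule nn_integral_cmult)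
  qed
  also have "\<dots> = (\<integral>\<^sup>+w. F w * (\<integral>\<^sup>+t. G (w + t) \<partial>push_minus \<mu>) \<partial>lborel)"
    unfolding push_minus_def
    by (intro nn_integral_cong arg_cong2[where f="(*)"] refl, subst nn_integral_distr[OF md]) auto
  finally show ?thesis .
qed


lemma joint_meas:
  fixes \<mu> :: "('a::euclidean_space \<times> 'a) measure" and f g :: "'a \<Rightarrow> real"
  assumes borel: "sets \<mu> = sets borel"
    and [measurable]: "f \<in> borel_measurable borel" "g \<in> borel_measurable borel"
  shows "(\<lambda>(x, yz). f (x - fst yz) * g (x - snd yz)) \<in> borel_measurable (lborel \<Otimes>\<^sub>M \<mu>)"
    and "(\<lambda>(x, yz). ennreal (\<bar>f (x - fst yz)\<bar> * \<bar>g (x - snd yz)\<bar>)) \<in> borel_measurable (lborel \<Otimes>\<^sub>M \<mu>)"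
    and "\<And>x. (\<lambda>yz. f (x - fst yz) * g (x - snd yz)) \<in> borel_measurable \<mu>"
proof -
  have S: "sets \<mu> = sets (lborel \<Otimes>\<^sub>M (lborel::'a measure))" using sets_mu[OF borel] .
  show "(\<lambda>(x, yz). f (x - fst yz) * g (x - snd yz)) \<in> borel_measurable (lborel \<Otimes>\<^sub>M \<mu>)"
    by (subst measurable_cong_sets[OF sets_pair_measure_cong[OF refl S] refl]) measurable
  show "(\<lambda>(x, yz). ennreal (\<bar>f (x - fst yz)\<bar> * \<bar>g (x - snd yz)\<bar>)) \<in> borel_measurable (lborel \<Otimes>\<^sub>M \<mu>)"
    by (subst measurable_cong_sets[OF sets_pair_measure_cong[OF refl S] refl]) measurable
  show "\<And>x. (\<lambda>yz. f (x - fst yz) * g (x - snd yz)) \<in> borel_measurable \<mu>"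
    by (subst measurable_cong_sets[OF S refl]) measurable
qed

lemma P1:
  fixes \<mu> :: "('a::euclidean_space \<times> 'a) measure" and f g :: "'a \<Rightarrow> real"
  assumes borel: "sets \<mu> = sets borel" and fin: "finite_measure \<mu>"
    and fm[measurable]: "f \<in> borel_measurable borel" and gm[measurable]: "g \<in> borel_measurable borel"
    and key: "(\<integral>\<^sup>+x. (\<integral>\<^sup>+yz. ennreal (\<bar>f (x - fst yz)\<bar> * \<bar>g (x - snd yz)\<bar>) \<partial>\<mu>) \<partial>lborel) \<le> ennreal M"
    and M0: "0 \<le> M"
  shows "AE x in lborel. integrable \<mu> (\<lambda>yz. f (x - fst yz) * g (x - snd yz))"
    and "T_bil \<mu> f g \<in> borel_measurable borel"
    and "integrable lborel (T_bil \<mu> f g)"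
    and "(\<integral>x. \<bar>T_bil \<mu> f g x\<bar> \<partial>lborel) \<le> M"
proof -
  interpret finite_measure \<mu> by fact
  note jm = joint_meas[OF borel fm gm]
  define S where "S x = (\<integral>\<^sup>+yz. ennreal (\<bar>f (x - fst yz)\<bar> * \<bar>g (x - snd yz)\<bar>) \<partial>\<mu>)" for x
  have Sm: "S \<in> borel_measurable lborel"
    unfolding S_def by (rule borel_measurable_nn_integral) (use jm(2) in simp)
  have Sle: "integral\<^sup>N lborel S \<le> ennreal M" using key unfolding S_def[abs_def] .
  have "integral\<^sup>N lborel S \<noteq> \<infinity>" using neq_top_trans[OF ennreal_neq_top Sle] by simp
  then have AES: "AE x in lborel. S x \<noteq> \<infinity>" by (rule nn_integral_PInf_AE[OF Sm])
  have intS: "integrable \<mu> (\<lambda>yz. f (x - fst yz) * g (x - snd yz))" if "S x \<noteq> \<infinity>" for x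
  proof (rule integrableI_bounded)
    show "(\<lambda>yz. f (x - fst yz) * g (x - snd yz)) \<in> borel_measurable \<mu>" by (rule jm(3))
    show "(\<integral>\<^sup>+yz. ennreal (norm (f (x - fst yz) * g (x - snd yz))) \<partial>\<mu>) < \<infinity>"
      using that unfolding S_def by (simp add: abs_mult top.not_eq_extremum)
  qed
  show "AE x in lborel. integrable \<mu> (\<lambda>yz. f (x - fst yz) * g (x - snd yz))"
    using AES by eventually_elim (rule intS)
  have Tm: "T_bil \<mu> f g \<in> borel_measurable lborel"
    unfolding T_bil_def[abs_def] by (rule borel_measurable_lebesgue_integral) (use jm(1) in simp)
  then show "T_bil \<mu> f g \<in> borel_measurable borel" by simp
  have TS: "ennreal (norm (T_bil \<mu> f g x)) \<le> S x" for x
  proof (cases "integrable \<mu> (\<lambda>yz. f (x - fst yz) * g (x - snd yz))")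
    case True
    show ?thesis unfolding T_bil_def S_def
      using integral_norm_bound_ennreal[OF True] by (simp add: abs_mult)
  next
    case False
    then show ?thesis unfolding T_bil_def by (simp add: not_integrable_integral_eq)
  qed
  have bnd: "(\<integral>\<^sup>+x. ennreal (norm (T_bil \<mu> f g x)) \<partial>lborel) \<le> ennreal M"
    using order_trans[OF nn_integral_mono[OF TS] key[folded S_def]] .
  show IT: "integrable lborel (T_bil \<mu> f g)"
    by (rule integrableI_bounded[OF Tm]) (use bnd in \<open>auto intro: order_le_less_trans\<close>)
  have "ennreal (\<integral>x. \<bar>T_bil \<mu> f g x\<bar> \<partial>lborel) = (\<integral>\<^sup>+x. ennreal (norm (T_bil \<mu> f g x)) \<partial>lborel)"
    using IT by (subst nn_integral_eq_integral) auto
  with bnd have "ennreal (\<integral>x. \<bar>T_bil \<mu> f g x\<bar> \<partial>lborel) \<le> ennreal M" by simp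
  with M0 show "(\<integral>x. \<bar>T_bil \<mu> f g x\<bar> \<partial>lborel) \<le> M" by simp
qed

lemma nn_reflect:
  fixes f :: "'a::euclidean_space \<Rightarrow> ennreal"
  assumes [measurable]: "f \<in> borel_measurable borel"
  shows "(\<integral>\<^sup>+x. f (c - x) \<partial>lborel) = (\<integral>\<^sup>+x. f x \<partial>lborel)"
proof -
  have "(\<integral>\<^sup>+x. f x \<partial>lborel) = (\<integral>\<^sup>+x. f x \<partial>(density (distr lborel borel (\<lambda>x. c + (-1::real) *\<^sub>R x)) (\<lambda>_. \<bar>-1::real\<bar>^DIM('a))))"
    by (subst lborel_affine[of "-1" c, symmetric]) auto
  also have "\<dots> = (\<integral>\<^sup>+x. f (c - x) \<partial>lborel)"
    by (simp add: nn_integral_density nn_integral_distr)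
  finally show ?thesis ..
qed



lemma ind_meas:
  fixes r :: real
  shows "(\<lambda>(u::'a::euclidean_space, x::'a). indicator (cball u r) x :: ennreal) \<in> borel_measurable (lborel \<Otimes>\<^sub>M lborel)"
proof -
  have "(\<lambda>(u::'a, x::'a). indicator (cball u r) x :: ennreal) = (\<lambda>p. if dist (fst p) (snd p) \<le> r then 1 else 0)"
    by (auto simp: indicator_def mem_cball)
  also have "\<dots> \<in> borel_measurable (lborel \<Otimes>\<^sub>M lborel)" by measurable
  finally show ?thesis .
qed

lemma avg:
  fixes \<phi> :: "'a::euclidean_space \<Rightarrow> ennreal"
  assumes [measurable]: "\<phi> \<in> borel_measurable borel" and r: "0 \<le> r"
  shows "(\<integral>\<^sup>+u. (\<integral>\<^sup>+x. indicator (cball u r) x * \<phi> x \<partial>lborel) \<partial>lborel) = (\<integral>\<^sup>+x. \<phi> x \<partial>lborel) * emeasure lborel (cball (0::'a) r)"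
proof -
  have m: "(\<lambda>(u::'a, x::'a). indicator (cball u r) x * \<phi> x) \<in> borel_measurable (lborel \<Otimes>\<^sub>M lborel)"
  proof -
    have [measurable]: "(\<lambda>p. indicator (cball (fst p) r) (snd p) :: ennreal) \<in> borel_measurable (lborel \<Otimes>\<^sub>M (lborel::'a measure))"
      using ind_meas[of r] by (simp add: split_beta')
    show ?thesis by (simp add: split_beta') measurable
  qed
  have "(\<integral>\<^sup>+u. (\<integral>\<^sup>+x. indicator (cball u r) x * \<phi> x \<partial>lborel) \<partial>lborel)
     = (\<integral>\<^sup>+x. (\<integral>\<^sup>+u. indicator (cball u r) x * \<phi> x \<partial>lborel) \<partial>lborel)"
    using lborel_pair.Fubini'[OF m] by simp
  also have "\<dots> = (\<integral>\<^sup>+x. \<phi> x * emeasure lborel (cball (0::'a) r) \<partial>lborel)"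
  proof (rule nn_integral_cong)
    fix x :: 'a
    have "(\<integral>\<^sup>+u. indicator (cball u r) x * \<phi> x \<partial>lborel) = (\<integral>\<^sup>+u. \<phi> x * indicator (cball x r) u \<partial>lborel)"
      by (intro nn_integral_cong) (auto simp: indicator_def mem_cball dist_commute)
    also have "\<dots> = \<phi> x * emeasure lborel (cball x r)" by (rule nn_integral_cmult_indicator) auto
    also have "\<dots> = \<phi> x * emeasure lborel (cball (0::'a) r)" using r by (simp add: emeasure_cball)
    finally show "(\<integral>\<^sup>+u. indicator (cball u r) x * \<phi> x \<partial>lborel) = \<phi> x * emeasure lborel (cball (0::'a) r)" .
  qed
  also have "\<dots> = (\<integral>\<^sup>+x. \<phi> x \<partial>lborel) * emeasure lborel (cball (0::'a) r)"
    by (rule nn_integral_multc) simp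
  finally show ?thesis .
qed



lemma powr_shift: "0 < (l::real) \<Longrightarrow> l * l powr (s - 1) = l powr s"
proof -
  assume l: "0 < l"
  have "l powr s = l powr (1 + (s - 1))" by simp
  also have "\<dots> = l powr 1 * l powr (s - 1)" by (rule powr_add)
  finally show ?thesis using l by simp
qed

lemma young_tangent:
  fixes t l s :: real
  assumes t: "0 \<le> t" and l: "0 < l" and s: "0 < s" "s < 1"
  shows "t powr s \<le> s * l powr (s - 1) * t + (1 - s) * l powr s"
proof (cases "t = 0")
  case True then show ?thesis using s l by simp
next
  case False
  then have tp: "t > 0" using t by simp
  have Y: "t powr s * l powr (1 - s) \<le> s * t + (1 - s) * l"
    using Youngs_inequality_0[of s "1 - s" t l] tp l s by simp
  have e1: "l powr (1 - s) * l powr (s - 1) = 1" using l by (simp add: powr_add[symmetric])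
  have e2: "l * l powr (s - 1) = l powr s" using powr_shift[OF l] .
  have "t powr s = t powr s * l powr (1 - s) * l powr (s - 1)" using e1 by (simp add: mult.assoc)
  also have "\<dots> \<le> (s * t + (1 - s) * l) * l powr (s - 1)"
    by (rule mult_right_mono[OF Y]) simp
  also have "\<dots> = s * l powr (s - 1) * t + (1 - s) * l powr s"
    using e2 by (simp add: algebra_simps)
  finally show ?thesis .
qed

lemma LB:
  fixes T Tu :: "'a::euclidean_space \<Rightarrow> real" and c s V R :: real and u :: 'a
  assumes Tm[measurable]: "T \<in> borel_measurable borel" and Tum[measurable]: "Tu \<in> borel_measurable borel"
    and ITu: "integrable lborel Tu" and bnd: "(\<integral>x. \<bar>Tu x\<bar> \<partial>lborel) \<le> c" and c0: "0 \<le> c"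
    and eq: "\<And>x. x \<in> cball u R \<Longrightarrow> T x = Tu x"
    and s: "0 < s" "s < 1"
    and V: "0 < V" "emeasure lborel (cball u R) = ennreal V"
  shows "(\<integral>\<^sup>+x. indicator (cball u R) x * ennreal (\<bar>T x\<bar> powr s) \<partial>lborel) \<le> ennreal (V powr (1 - s) * c powr s)"
proof (cases "c = 0")
  case True
  have I1: "integrable lborel (\<lambda>x. \<bar>Tu x\<bar>)" using ITu by simp
  have "(\<integral>x. \<bar>Tu x\<bar> \<partial>lborel) = 0" using bnd True
    by (metis abs_ge_zero antisym integral_nonneg_AE AE_I2)
  then have "AE x in lborel. \<bar>Tu x\<bar> = 0"
    using integral_nonneg_eq_0_iff_AE[OF I1] by simp
  then have "AE x in lborel. indicator (cball u R) x * ennreal (\<bar>T x\<bar> powr s) = 0"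
    by eventually_elim (auto simp: indicator_def eq)
  then have "(\<integral>\<^sup>+x. indicator (cball u R) x * ennreal (\<bar>T x\<bar> powr s) \<partial>lborel) = (\<integral>\<^sup>+x. 0 \<partial>(lborel::'a measure))"
    by (rule nn_integral_cong_AE)
  then show ?thesis by simp
next
  case False
  then have cp: "c > 0" using c0 by simp
  define l where "l = c / V"
  have lp: "l > 0" using cp V by (simp add: l_def)
  define k1 where "k1 = s * l powr (s - 1)"
  define k2 where "k2 = (1 - s) * l powr s"
  have k1: "k1 \<ge> 0" and k2: "k2 \<ge> 0" using s by (auto simp: k1_def k2_def)
  define h where "h x = k1 * (indicator (cball u R) x * \<bar>Tu x\<bar>) + k2 * indicator (cball u R) x" for x
  have fin: "emeasure lborel (cball u R) < \<infinity>" using V by simp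
  have Ii: "integrable lborel (\<lambda>x. indicator (cball u R) x * \<bar>Tu x\<bar>)"
    using integrable_mult_indicator[of "cball u R" lborel "\<lambda>x. \<bar>Tu x\<bar>"] ITu by simp
  have Ic: "integrable lborel (indicator (cball u R) :: 'a \<Rightarrow> real)"
    using fin by (intro integrable_real_indicator) auto
  have Ih: "integrable lborel h" unfolding h_def
    using Ii Ic by (intro Bochner_Integration.integrable_add integrable_mult_right) auto
  have hnn: "0 \<le> h x" for x using k1 k2 by (simp add: h_def)
  have pt: "indicator (cball u R) x * ennreal (\<bar>T x\<bar> powr s) \<le> ennreal (h x)" for x
  proof (cases "x \<in> cball u R")
    case True
    then have "\<bar>T x\<bar> powr s \<le> h x" unfolding h_def k1_def k2_def using young_tangent[of "\<bar>Tu x\<bar>" l s] lp s eq[OF True]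
      by simp
    then show ?thesis using True by (simp add: ennreal_leI)
  qed simp
  have mV: "measure lborel (cball u R) = V" using V by (simp add: measure_def)
  have "(\<integral>x. h x \<partial>lborel) = k1 * (\<integral>x. indicator (cball u R) x * \<bar>Tu x\<bar> \<partial>lborel) + k2 * V"
    unfolding h_def using Ii Ic fin mV
    by (subst Bochner_Integration.integral_add) auto
  also have "\<dots> \<le> k1 * c + k2 * V"
  proof -
    have "(\<integral>x. indicator (cball u R) x * \<bar>Tu x\<bar> \<partial>lborel) \<le> (\<integral>x. \<bar>Tu x\<bar> \<partial>lborel)"
      using ITu Ii by (intro Bochner_Integration.integral_mono) (auto simp: indicator_def)
    then show ?thesis using bnd k1 by (intro add_right_mono mult_left_mono) auto
  qed
  also have "k1 * c + k2 * V = V powr (1 - s) * c powr s"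
  proof -
    have c: "c = l * V" using V by (simp add: l_def)
    have e2: "l * l powr (s - 1) = l powr s" using powr_shift[OF lp] .
    have "k1 * c = s * (l * l powr (s - 1)) * V" by (simp add: k1_def c mult_ac)
    also have "\<dots> = s * l powr s * V" by (simp only: e2)
    finally have "k1 * c + k2 * V = s * l powr s * V + (1 - s) * l powr s * V" by (simp add: k2_def)
    also have "\<dots> = l powr s * V" by (simp add: algebra_simps)
    also have "l powr s = c powr s / V powr s" unfolding l_def using cp V by (simp add: powr_divide)
    also have "c powr s / V powr s * V = V powr (1 - s) * c powr s"
      using V by (simp add: powr_diff)
    finally show ?thesis .
  qed
  finally have hb: "(\<integral>x. h x \<partial>lborel) \<le> V powr (1 - s) * c powr s" .
  have "(\<integral>\<^sup>+x. indicator (cball u R) x * ennreal (\<bar>T x\<bar> powr s) \<partial>lborel) \<le> (\<integral>\<^sup>+x. ennreal (h x) \<partial>lborel)"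
    by (intro nn_integral_mono pt)
  also have "\<dots> = ennreal (\<integral>x. h x \<partial>lborel)" using Ih hnn by (intro nn_integral_eq_integral) auto
  also have "\<dots> \<le> ennreal (V powr (1 - s) * c powr s)" using hb by (rule ennreal_leI)
  finally show ?thesis .
qed



lemma young_u:
  fixes al be Na Nb a b s :: real
  assumes al: "0 \<le> al" "al \<le> Na" and be: "0 \<le> be" "be \<le> Nb" and Na: "0 < Na" and Nb: "0 < Nb"
    and a: "1 \<le> a" and b: "1 \<le> b" and s: "0 < s" "s < 1" and sab: "1 \<le> s/a + s/b"
  shows "(al * be) powr s \<le> (Na * Nb) powr s * ((s/a) * (al powr a / Na powr a) + (1 - s/a) * (be powr b / Nb powr b))"
proof -
  define X where "X = (al / Na) powr a"
  define Y where "Y = (be / Nb) powr b"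
  define th where "th = s / a"
  have th: "0 < th" "th < 1" using s a by (auto simp: th_def field_simps)
  have X0: "0 \<le> X" and Y0: "0 \<le> Y" by (auto simp: X_def Y_def)
  have "\<bar>be / Nb\<bar> \<le> 1" using be Nb by simp
  then have Y1: "Y \<le> 1" unfolding Y_def using b by (intro powr_le1) auto
  have eX: "(al / Na) powr s = X powr th" unfolding X_def th_def using a by (simp add: powr_powr)
  have eY: "(be / Nb) powr s = Y powr (s / b)" unfolding Y_def using b by (simp add: powr_powr)
  have "Y powr (s / b) \<le> Y powr (1 - th)"
    by (rule powr_mono') (use sab Y0 Y1 in \<open>auto simp: th_def\<close>)
  have XY: "X powr th * Y powr (1 - th) \<le> th * X + (1 - th) * Y"
  proof (cases "X = 0 \<or> Y = 0")
    case True then show ?thesis using X0 Y0 th by auto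
  next
    case False then show ?thesis using Youngs_inequality_0[of th "1 - th" X Y] X0 Y0 th by auto
  qed
  have "(al * be) powr s = (Na * Nb) powr s * ((al / Na) powr s * (be / Nb) powr s)"
    using al be Na Nb by (simp add: powr_mult powr_divide)
  also have "\<dots> \<le> (Na * Nb) powr s * (X powr th * Y powr (1 - th))"
  proof (intro mult_left_mono)
    show "(al / Na) powr s * (be / Nb) powr s \<le> X powr th * Y powr (1 - th)"
      unfolding eX eY by (intro mult_left_mono \<open>Y powr (s / b) \<le> Y powr (1 - th)\<close>) simp
  qed simp
  also have "\<dots> \<le> (Na * Nb) powr s * (th * X + (1 - th) * Y)"
    by (intro mult_left_mono XY) simp
  also have "X = al powr a / Na powr a" unfolding X_def using al Na by (simp add: powr_divide)
  also have "Y = be powr b / Nb powr b" unfolding Y_def using be Nb by (simp add: powr_divide)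
  finally show ?thesis by (simp add: th_def)
qed

lemma loc_norm:
  fixes f :: "'a::euclidean_space \<Rightarrow> real"
  assumes F: "memLp a f" and a: "0 < a" and A: "A \<in> sets borel"
  shows "memLp a (\<lambda>v. indicator A v * f v)"
    and "lp_norm a (\<lambda>v. indicator A v * f v) powr a = (\<integral>v. indicator A v * \<bar>f v\<bar> powr a \<partial>lborel)"
    and "lp_norm a f powr a = (\<integral>v. \<bar>f v\<bar> powr a \<partial>lborel)"
    and "lp_norm a (\<lambda>v. indicator A v * f v) \<le> lp_norm a f"
    and "0 \<le> lp_norm a (\<lambda>v. indicator A v * f v)"
proof -
  have fm[measurable]: "f \<in> borel_measurable borel" and If: "integrable lborel (\<lambda>x. \<bar>f x\<bar> powr a)"
    using F by (auto simp: memLp_def)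
  have e: "\<bar>indicator A v * f v\<bar> powr a = indicator A v * \<bar>f v\<bar> powr a" for v
    using a by (auto simp: indicator_def)
  have I2: "integrable lborel (\<lambda>v. indicator A v * \<bar>f v\<bar> powr a)"
    using integrable_mult_indicator[of A lborel "\<lambda>v. \<bar>f v\<bar> powr a"] If A by simp
  show "memLp a (\<lambda>v. indicator A v * f v)" unfolding memLp_def e using I2 A by simp
  have i0: "0 \<le> (\<integral>v. indicator A v * \<bar>f v\<bar> powr a \<partial>lborel)"
    by (intro Bochner_Integration.integral_nonneg) auto
  have i1: "0 \<le> (\<integral>v. \<bar>f v\<bar> powr a \<partial>lborel)"
    by (intro Bochner_Integration.integral_nonneg) auto
  show "lp_norm a (\<lambda>v. indicator A v * f v) powr a = (\<integral>v. indicator A v * \<bar>f v\<bar> powr a \<partial>lborel)"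
    unfolding lp_norm_def e using a i0 by (simp add: powr_powr)
  show "lp_norm a f powr a = (\<integral>v. \<bar>f v\<bar> powr a \<partial>lborel)"
    unfolding lp_norm_def using a i1 by (simp add: powr_powr)
  have "(\<integral>v. indicator A v * \<bar>f v\<bar> powr a \<partial>lborel) \<le> (\<integral>v. \<bar>f v\<bar> powr a \<partial>lborel)"
    using I2 If by (intro Bochner_Integration.integral_mono) (auto simp: indicator_def)
  then show "lp_norm a (\<lambda>v. indicator A v * f v) \<le> lp_norm a f"
    unfolding lp_norm_def e using a i0 by (intro powr_mono2) auto
  show "0 \<le> lp_norm a (\<lambda>v. indicator A v * f v)" by (simp add: lp_norm_def)
qed



lemma ind_meas_real:
  fixes r :: real
  shows "(\<lambda>(u::'a::euclidean_space, x::'a). indicator (cball u r) x :: real) \<in> borel_measurable (lborel \<Otimes>\<^sub>M lborel)"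
proof -
  have "(\<lambda>(u::'a, x::'a). indicator (cball u r) x :: real) = (\<lambda>p. if dist (fst p) (snd p) \<le> r then 1 else 0)"
    by (auto simp: indicator_def mem_cball)
  also have "\<dots> \<in> borel_measurable (lborel \<Otimes>\<^sub>M lborel)" by measurable
  finally show ?thesis .
qed

lemma lp_norm_nonneg: "0 \<le> lp_norm a f"
  by (simp add: lp_norm_def)

lemma bb1:
  fixes \<mu> :: "('a::euclidean_space \<times> 'a) measure"
  assumes borel: "sets \<mu> = sets borel" and fin: "finite_measure \<mu>" and C0: "0 \<le> C"
    and key: "\<And>f g. memLp a f \<Longrightarrow> memLp b g \<Longrightarrow>
      (\<integral>\<^sup>+x. (\<integral>\<^sup>+yz. ennreal (\<bar>f (x - fst yz)\<bar> * \<bar>g (x - snd yz)\<bar>) \<partial>\<mu>) \<partial>lborel) \<le> ennreal (C * lp_norm a f * lp_norm b g)"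
  shows "bil_bounded \<mu> a b 1"
  unfolding bil_bounded_def
proof (intro exI[of _ C] allI impI)
  fix f g :: "'a \<Rightarrow> real" assume F: "memLp a f" and G: "memLp b g"
  have fm: "f \<in> borel_measurable borel" and gm: "g \<in> borel_measurable borel"
    using F G by (auto simp: memLp_def)
  have M0: "0 \<le> C * lp_norm a f * lp_norm b g" using C0 by (simp add: lp_norm_nonneg)
  note P = P1[OF borel fin fm gm key[OF F G] M0]
  have "integrable lborel (\<lambda>x. \<bar>T_bil \<mu> f g x\<bar>)" using P(3) by simp
  moreover have "0 \<le> (\<integral>x. \<bar>T_bil \<mu> f g x\<bar> \<partial>lborel)" by simp
  ultimately show "(AE x in lborel. integrable \<mu> (\<lambda>yz. f (x - fst yz) * g (x - snd yz))) \<and>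
         memLp 1 (T_bil \<mu> f g) \<and> lp_norm 1 (T_bil \<mu> f g) \<le> C * lp_norm a f * lp_norm b g"
    using P by (simp add: memLp_def lp_norm_def)
qed

lemma bbs:
  fixes \<mu> :: "('a::euclidean_space \<times> 'a) measure"
  assumes borel: "sets \<mu> = sets borel" and fin: "finite_measure \<mu>"
    and cpt: "\<exists>K. compact K \<and> emeasure \<mu> (UNIV - K) = 0"
    and a: "1 \<le> a" and b: "1 \<le> b" and C0: "0 \<le> C"
    and key: "\<And>f g. memLp a f \<Longrightarrow> memLp b g \<Longrightarrow>
      (\<integral>\<^sup>+x. (\<integral>\<^sup>+yz. ennreal (\<bar>f (x - fst yz)\<bar> * \<bar>g (x - snd yz)\<bar>) \<partial>\<mu>) \<partial>lborel) \<le> ennreal (C * lp_norm a f * lp_norm b g)"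
    and s: "0 < s" "s < 1" and sab: "1 \<le> s/a + s/b"
  shows "bil_bounded \<mu> a b s"
proof -
  obtain K where K: "compact K" "emeasure \<mu> (UNIV - K) = 0" using cpt by blast
  obtain R0 where R0: "\<forall>p\<in>K. norm p \<le> R0" using compact_imp_bounded[OF K(1)] bounded_iff by blast
  define R where "R = max R0 1"
  have R: "R > 0" by (simp add: R_def)
  have AEK: "AE yz in \<mu>. norm (fst yz) \<le> R \<and> norm (snd yz) \<le> R"
  proof (rule AE_I')
    have "open (UNIV - K)" using compact_imp_closed[OF K(1)] by (simp add: open_Diff)
    then have "UNIV - K \<in> sets \<mu>" using borel by simp
    then show "UNIV - K \<in> null_sets \<mu>" using K(2) by (simp add: null_sets_def)
    show "{yz \<in> space \<mu>. \<not> (norm (fst yz) \<le> R \<and> norm (snd yz) \<le> R)} \<subseteq> UNIV - K"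
    proof
      fix yz assume yz: "yz \<in> {yz \<in> space \<mu>. \<not> (norm (fst yz) \<le> R \<and> norm (snd yz) \<le> R)}"
      have "yz \<notin> K"
      proof
        assume "yz \<in> K"
        then have "norm yz \<le> R0" using R0 by auto
        moreover have "norm (fst yz) \<le> norm yz" "norm (snd yz) \<le> norm yz"
          using norm_fst_le[of "fst yz" "snd yz"] norm_snd_le[of "snd yz" "fst yz"] by simp_all
        ultimately show False using yz by (auto simp: R_def)
      qed
      then show "yz \<in> UNIV - K" by simp
    qed
  qed
  define V where "V = unit_ball_vol (real DIM('a)) * R ^ DIM('a)"
  define V2 where "V2 = unit_ball_vol (real DIM('a)) * (2 * R) ^ DIM('a)"
  have Vp: "V > 0" and V2p: "V2 > 0" using R by (auto simp: V_def V2_def)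
  have eV: "emeasure lborel (cball c R) = ennreal V" for c :: 'a using R by (simp add: emeasure_cball V_def)
  have eV2: "emeasure lborel (cball c (2 * R)) = ennreal V2" for c :: 'a using R by (simp add: emeasure_cball V2_def)
  define K1 where "K1 = V powr (1 - s) * C powr s * V2 / V"
  have K1: "0 \<le> K1" using Vp V2p by (simp add: K1_def)
  show ?thesis unfolding bil_bounded_def
  proof (intro exI[of _ "K1 powr (1/s)"] allI impI)
    fix f g :: "'a \<Rightarrow> real" assume F: "memLp a f" and G: "memLp b g"
    have fm[measurable]: "f \<in> borel_measurable borel" and gm[measurable]: "g \<in> borel_measurable borel"
      using F G by (auto simp: memLp_def)
    define Na where "Na = lp_norm a f"
    define Nb where "Nb = lp_norm b g"
    define T where "T = T_bil \<mu> f g"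
    have Na0: "0 \<le> Na" and Nb0: "0 \<le> Nb" by (simp_all add: Na_def Nb_def lp_norm_nonneg)
    have M0: "0 \<le> C * lp_norm a f * lp_norm b g" using C0 by (simp add: lp_norm_nonneg)
    note P = P1[OF borel fin fm gm key[OF F G] M0]
    have Tm[measurable]: "T \<in> borel_measurable borel" using P(2) by (simp add: T_def)
    define fu where "fu u = (\<lambda>v. indicator (cball u (2 * R)) v * f v)" for u
    define gu where "gu u = (\<lambda>v. indicator (cball u (2 * R)) v * g v)" for u
    define al where "al u = lp_norm a (fu u)" for u
    define be where "be u = lp_norm b (gu u)" for u
    have a0: "0 < a" and b0: "0 < b" using a b by auto
    note LF = loc_norm[OF F a0, of "cball u (2 * R)" for u, folded fu_def al_def]
    note LG = loc_norm[OF G b0, of "cball u (2 * R)" for u, folded gu_def be_def]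
    have LBu: "(\<integral>\<^sup>+x. indicator (cball u R) x * ennreal (\<bar>T x\<bar> powr s) \<partial>lborel)
        \<le> ennreal (V powr (1 - s) * (C * al u * be u) powr s)" for u
    proof -
      have Fu: "memLp a (fu u)" and Gu: "memLp b (gu u)" using LF(1) LG(1) by auto
      have fum: "fu u \<in> borel_measurable borel" and gum: "gu u \<in> borel_measurable borel"
        using Fu Gu by (auto simp: memLp_def)
      have Mu: "0 \<le> C * al u * be u" using C0 by (simp add: al_def be_def lp_norm_nonneg)
      note Pu = P1[OF borel fin fum gum key[OF Fu Gu, folded al_def be_def] Mu]
      have eq: "T x = T_bil \<mu> (fu u) (gu u) x" if x: "x \<in> cball u R" for x
        unfolding T_def T_bil_def
      proof (rule integral_cong_AE)
        show "(\<lambda>yz. f (x - fst yz) * g (x - snd yz)) \<in> borel_measurable \<mu>" by (rule joint_meas(3)[OF borel fm gm])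
        show "(\<lambda>yz. fu u (x - fst yz) * gu u (x - snd yz)) \<in> borel_measurable \<mu>" by (rule joint_meas(3)[OF borel fum gum])
        show "AE yz in \<mu>. f (x - fst yz) * g (x - snd yz) = fu u (x - fst yz) * gu u (x - snd yz)"
          using AEK
        proof eventually_elim
          case (elim yz)
          have "dist u (x - fst yz) \<le> 2 * R" "dist u (x - snd yz) \<le> 2 * R"
          proof -
            have "dist u (x - fst yz) = norm ((u - x) + fst yz)" by (simp add: dist_norm algebra_simps)
            also have "\<dots> \<le> norm (u - x) + norm (fst yz)" by (rule norm_triangle_ineq)
            also have "norm (u - x) = dist u x" by (simp add: dist_norm)
            finally have "dist u (x - fst yz) \<le> dist u x + norm (fst yz)" .
            then show "dist u (x - fst yz) \<le> 2 * R" using x elim by (auto simp: mem_cball)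
            have "dist u (x - snd yz) = norm ((u - x) + snd yz)" by (simp add: dist_norm algebra_simps)
            also have "\<dots> \<le> norm (u - x) + norm (snd yz)" by (rule norm_triangle_ineq)
            also have "norm (u - x) = dist u x" by (simp add: dist_norm)
            finally have "dist u (x - snd yz) \<le> dist u x + norm (snd yz)" .
            then show "dist u (x - snd yz) \<le> 2 * R" using x elim by (auto simp: mem_cball)
          qed
          then show ?case by (simp add: fu_def gu_def mem_cball)
        qed
      qed
      show ?thesis
        by (rule LB[OF Tm Pu(2) Pu(3) Pu(4) Mu eq s Vp eV])
    qed
    have Tsm[measurable]: "(\<lambda>x. ennreal (\<bar>T x\<bar> powr s)) \<in> borel_measurable borel" by measurable
    have st1: "(\<integral>\<^sup>+x. ennreal (\<bar>T x\<bar> powr s) \<partial>lborel) * ennreal V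
        = (\<integral>\<^sup>+u. (\<integral>\<^sup>+x. indicator (cball u R) x * ennreal (\<bar>T x\<bar> powr s) \<partial>lborel) \<partial>lborel)"
      using avg[OF Tsm, of R] R eV[of 0] by simp
    have st2: "\<dots> \<le> (\<integral>\<^sup>+u. ennreal (V powr (1 - s) * (C * al u * be u) powr s) \<partial>lborel)"
      by (intro nn_integral_mono LBu)
    define Au where "Au u = (\<integral>v. indicator (cball u (2 * R)) v * \<bar>f v\<bar> powr a \<partial>lborel)" for u
    define Bu where "Bu u = (\<integral>v. indicator (cball u (2 * R)) v * \<bar>g v\<bar> powr b \<partial>lborel)" for u
    have alA: "al u powr a = Au u" for u using LF(2) by (simp add: Au_def)
    have beB: "be u powr b = Bu u" for u using LG(2) by (simp add: Bu_def)
    have al0: "0 \<le> al u" and alN: "al u \<le> Na" for u using LF(4,5) by (auto simp: Na_def)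
    have be0: "0 \<le> be u" and beN: "be u \<le> Nb" for u using LG(4,5) by (auto simp: Nb_def)
    have [measurable]: "(\<lambda>p. indicator (cball (fst p) (2 * R)) (snd p) :: real) \<in> borel_measurable (lborel \<Otimes>\<^sub>M (lborel::'a measure))"
      using ind_meas_real[of "2 * R"] by (simp add: split_beta')
    have Am[measurable]: "Au \<in> borel_measurable lborel" unfolding Au_def[abs_def]
      by (rule lborel.borel_measurable_lebesgue_integral) (simp add: split_beta')
    have Bm[measurable]: "Bu \<in> borel_measurable lborel" unfolding Bu_def[abs_def]
      by (rule lborel.borel_measurable_lebesgue_integral) (simp add: split_beta')
    have If: "integrable lborel (\<lambda>v. \<bar>f v\<bar> powr a)" and Ig: "integrable lborel (\<lambda>v. \<bar>g v\<bar> powr b)"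
      using F G by (auto simp: memLp_def)
    have intA: "(\<integral>\<^sup>+u. ennreal (Au u) \<partial>lborel) = ennreal (Na powr a) * ennreal V2"
    proof -
      have "ennreal (Au u) = (\<integral>\<^sup>+v. indicator (cball u (2 * R)) v * ennreal (\<bar>f v\<bar> powr a) \<partial>lborel)" for u
      proof -
        have I: "integrable lborel (\<lambda>v. indicator (cball u (2 * R)) v * \<bar>f v\<bar> powr a)"
          using integrable_mult_indicator[of "cball u (2 * R)" lborel "\<lambda>v. \<bar>f v\<bar> powr a"] If by simp
        have "ennreal (Au u) = (\<integral>\<^sup>+v. ennreal (indicator (cball u (2 * R)) v * \<bar>f v\<bar> powr a) \<partial>lborel)"
          unfolding Au_def by (rule nn_integral_eq_integral[OF I, symmetric]) auto
        also have "\<dots> = (\<integral>\<^sup>+v. indicator (cball u (2 * R)) v * ennreal (\<bar>f v\<bar> powr a) \<partial>lborel)"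
          by (intro nn_integral_cong) (auto simp: indicator_def)
        finally show ?thesis .
      qed
      then have "(\<integral>\<^sup>+u. ennreal (Au u) \<partial>lborel) = (\<integral>\<^sup>+u. (\<integral>\<^sup>+v. indicator (cball u (2 * R)) v * ennreal (\<bar>f v\<bar> powr a) \<partial>lborel) \<partial>lborel)"
        by simp
      also have "\<dots> = (\<integral>\<^sup>+v. ennreal (\<bar>f v\<bar> powr a) \<partial>lborel) * ennreal V2"
        using avg[of "\<lambda>v. ennreal (\<bar>f v\<bar> powr a)" "2 * R"] R eV2[of 0] by simp
      also have "(\<integral>\<^sup>+v. ennreal (\<bar>f v\<bar> powr a) \<partial>lborel) = ennreal (Na powr a)"
        using LF(3) If by (subst nn_integral_eq_integral) (auto simp: Na_def)
      finally show ?thesis .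
    qed
    have intB: "(\<integral>\<^sup>+u. ennreal (Bu u) \<partial>lborel) = ennreal (Nb powr b) * ennreal V2"
    proof -
      have "ennreal (Bu u) = (\<integral>\<^sup>+v. indicator (cball u (2 * R)) v * ennreal (\<bar>g v\<bar> powr b) \<partial>lborel)" for u
      proof -
        have I: "integrable lborel (\<lambda>v. indicator (cball u (2 * R)) v * \<bar>g v\<bar> powr b)"
          using integrable_mult_indicator[of "cball u (2 * R)" lborel "\<lambda>v. \<bar>g v\<bar> powr b"] Ig by simp
        have "ennreal (Bu u) = (\<integral>\<^sup>+v. ennreal (indicator (cball u (2 * R)) v * \<bar>g v\<bar> powr b) \<partial>lborel)"
          unfolding Bu_def by (rule nn_integral_eq_integral[OF I, symmetric]) auto
        also have "\<dots> = (\<integral>\<^sup>+v. indicator (cball u (2 * R)) v * ennreal (\<bar>g v\<bar> powr b) \<partial>lborel)"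
          by (intro nn_integral_cong) (auto simp: indicator_def)
        finally show ?thesis .
      qed
      then have "(\<integral>\<^sup>+u. ennreal (Bu u) \<partial>lborel) = (\<integral>\<^sup>+u. (\<integral>\<^sup>+v. indicator (cball u (2 * R)) v * ennreal (\<bar>g v\<bar> powr b) \<partial>lborel) \<partial>lborel)"
        by simp
      also have "\<dots> = (\<integral>\<^sup>+v. ennreal (\<bar>g v\<bar> powr b) \<partial>lborel) * ennreal V2"
        using avg[of "\<lambda>v. ennreal (\<bar>g v\<bar> powr b)" "2 * R"] R eV2[of 0] by simp
      also have "(\<integral>\<^sup>+v. ennreal (\<bar>g v\<bar> powr b) \<partial>lborel) = ennreal (Nb powr b)"
        using LG(3) Ig by (subst nn_integral_eq_integral) (auto simp: Nb_def)
      finally show ?thesis .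
    qed
    define k where "k = V powr (1 - s) * C powr s"
    have k0: "0 \<le> k" by (simp add: k_def)
    have st3: "(\<integral>\<^sup>+u. ennreal (V powr (1 - s) * (C * al u * be u) powr s) \<partial>lborel) \<le> ennreal (k * V2 * (Na * Nb) powr s)"
    proof (cases "Na = 0 \<or> Nb = 0")
      case True
      then have "al u = 0 \<or> be u = 0" for u using al0 alN be0 beN by (metis order_antisym)
      then have "(\<integral>\<^sup>+u. ennreal (V powr (1 - s) * (C * al u * be u) powr s) \<partial>lborel) = (\<integral>\<^sup>+u. 0 \<partial>(lborel::'a measure))"
        by (intro nn_integral_cong) auto
      then show ?thesis by simp
    next
      case False
      then have Nap: "0 < Na" and Nbp: "0 < Nb" using Na0 Nb0 by auto
      define P where "P = (Na * Nb) powr s"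
      define c1 where "c1 = k * P * (s / a) / Na powr a"
      define c2 where "c2 = k * P * (1 - s / a) / Nb powr b"
      have c1: "0 \<le> c1" and c2: "0 \<le> c2" using s a k0 by (auto simp: c1_def c2_def P_def)
      have A0: "0 \<le> Au u" and B0: "0 \<le> Bu u" for u using alA[of u] beB[of u] by (metis powr_ge_zero)+
      have pt: "V powr (1 - s) * (C * al u * be u) powr s \<le> c1 * Au u + c2 * Bu u" for u
      proof -
        have "V powr (1 - s) * (C * al u * be u) powr s = k * (al u * be u) powr s"
          using C0 al0 be0 by (simp add: k_def powr_mult mult.assoc)
        also have "\<dots> \<le> k * (P * ((s / a) * (al u powr a / Na powr a) + (1 - s / a) * (be u powr b / Nb powr b)))"
          unfolding P_def
          by (intro mult_left_mono young_u al0 alN be0 beN Nap Nbp a b s sab k0)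
        also have "\<dots> = c1 * Au u + c2 * Bu u"
          by (simp add: c1_def c2_def alA beB algebra_simps)
        finally show ?thesis .
      qed
      have "(\<integral>\<^sup>+u. ennreal (V powr (1 - s) * (C * al u * be u) powr s) \<partial>lborel) \<le> (\<integral>\<^sup>+u. ennreal (c1 * Au u + c2 * Bu u) \<partial>lborel)"
        by (intro nn_integral_mono ennreal_leI pt)
      also have "\<dots> = (\<integral>\<^sup>+u. ennreal c1 * ennreal (Au u) + ennreal c2 * ennreal (Bu u) \<partial>lborel)"
        using c1 c2 A0 B0 by (intro nn_integral_cong) (simp add: ennreal_plus ennreal_mult)
      also have "\<dots> = ennreal c1 * (\<integral>\<^sup>+u. ennreal (Au u) \<partial>lborel) + ennreal c2 * (\<integral>\<^sup>+u. ennreal (Bu u) \<partial>lborel)"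
        by (simp add: nn_integral_add nn_integral_cmult)
      also have "\<dots> = ennreal (c1 * Na powr a * V2 + c2 * Nb powr b * V2)"
        unfolding intA intB using c1 c2 V2p by (simp add: ennreal_plus ennreal_mult mult.assoc)
      also have "c1 * Na powr a * V2 + c2 * Nb powr b * V2 = k * V2 * P"
        using Nap Nbp by (simp add: c1_def c2_def field_simps)
      finally show ?thesis by (simp add: P_def)
    qed
    have KV: "K1 * V = k * V2" using Vp by (simp add: K1_def k_def)
    define X where "X = (\<integral>\<^sup>+x. ennreal (\<bar>T x\<bar> powr s) \<partial>lborel)"
    define Y where "Y = K1 * (Na * Nb) powr s"
    have Y0: "0 \<le> Y" using K1 by (simp add: Y_def)
    have XV: "X * ennreal V \<le> ennreal (Y * V)"
    proof -
      have "X * ennreal V \<le> ennreal (k * V2 * (Na * Nb) powr s)"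
        unfolding X_def st1 using order_trans[OF st2 st3] .
      also have "k * V2 * (Na * Nb) powr s = Y * V" using KV by (simp add: Y_def mult_ac)
      finally show ?thesis .
    qed
    have st4: "X \<le> ennreal Y"
    proof -
      have one: "ennreal V * ennreal (1 / V) = 1" using Vp by (simp add: ennreal_mult[symmetric])
      have "X = X * ennreal V * ennreal (1 / V)" using one by (simp add: mult.assoc)
      also have "\<dots> \<le> ennreal (Y * V) * ennreal (1 / V)" by (intro mult_right_mono XV) simp
      also have "\<dots> = ennreal Y" using Vp Y0 by (simp add: ennreal_mult[symmetric])
      finally show ?thesis .
    qed
    have IT: "integrable lborel (\<lambda>x. \<bar>T x\<bar> powr s)"
    proof (rule integrableI_bounded)
      show "(\<lambda>x. \<bar>T x\<bar> powr s) \<in> borel_measurable lborel" by simp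
      have "(\<integral>\<^sup>+x. ennreal (norm (\<bar>T x\<bar> powr s)) \<partial>lborel) = X" by (simp add: X_def)
      then show "(\<integral>\<^sup>+x. ennreal (norm (\<bar>T x\<bar> powr s)) \<partial>lborel) < \<infinity>"
        using st4 by (simp add: order_le_less_trans)
    qed
    have "ennreal (\<integral>x. \<bar>T x\<bar> powr s \<partial>lborel) = X"
      unfolding X_def using IT by (subst nn_integral_eq_integral) auto
    then have "ennreal (\<integral>x. \<bar>T x\<bar> powr s \<partial>lborel) \<le> ennreal Y" using st4 by simp
    then have iT: "(\<integral>x. \<bar>T x\<bar> powr s \<partial>lborel) \<le> Y" using Y0 by (simp add: ennreal_le_iff)
    have "lp_norm s T \<le> Y powr (1 / s)"
      unfolding lp_norm_def using iT s by (intro powr_mono2) auto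
    also have "Y powr (1 / s) = K1 powr (1 / s) * (Na * Nb)"
      unfolding Y_def using K1 Na0 Nb0 s by (simp add: powr_mult powr_powr)
    finally have nb: "lp_norm s T \<le> K1 powr (1 / s) * Na * Nb" by (simp add: mult.assoc)
    show "(AE x in lborel. integrable \<mu> (\<lambda>yz. f (x - fst yz) * g (x - snd yz))) \<and>
         memLp s (T_bil \<mu> f g) \<and> lp_norm s (T_bil \<mu> f g) \<le> K1 powr (1 / s) * lp_norm a f * lp_norm b g"
      using P(1) IT Tm nb by (simp add: memLp_def T_def Na_def Nb_def)
  qed
qed

lemma refl_int:
  fixes \<phi> :: "'a::euclidean_space \<Rightarrow> real"
  assumes [measurable]: "\<phi> \<in> borel_measurable borel" and nn: "\<And>x. 0 \<le> \<phi> x" and I: "integrable lborel \<phi>"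
  shows "integrable lborel (\<lambda>x. \<phi> (- x))" and "(\<integral>x. \<phi> (- x) \<partial>lborel) = (\<integral>x. \<phi> x \<partial>lborel)"
proof -
  have "(\<integral>\<^sup>+x. ennreal (\<phi> (- x)) \<partial>lborel) = (\<integral>\<^sup>+x. ennreal (\<phi> (0 - x)) \<partial>lborel)" by simp
  also have "\<dots> = (\<integral>\<^sup>+x. ennreal (\<phi> x) \<partial>lborel)" by (rule nn_reflect) measurable
  also have "\<dots> = ennreal (\<integral>x. \<phi> x \<partial>lborel)" using I nn by (intro nn_integral_eq_integral) auto
  finally have e: "(\<integral>\<^sup>+x. ennreal (\<phi> (- x)) \<partial>lborel) = ennreal (\<integral>x. \<phi> x \<partial>lborel)" .
  have "integrable lborel (\<lambda>x. \<phi> (- x)) \<and> (\<integral>x. \<phi> (- x) \<partial>lborel) = (\<integral>x. \<phi> x \<partial>lborel)"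
    using nn_integral_eq_integrable[of "\<lambda>x. \<phi> (- x)" lborel "\<integral>x. \<phi> x \<partial>lborel"] e nn
    by (simp add: Bochner_Integration.integral_nonneg)
  then show "integrable lborel (\<lambda>x. \<phi> (- x))" and "(\<integral>x. \<phi> (- x) \<partial>lborel) = (\<integral>x. \<phi> x \<partial>lborel)" by auto
qed

lemma memLp_refl:
  fixes f :: "'a::euclidean_space \<Rightarrow> real"
  assumes F: "memLp a f"
  shows "memLp a (\<lambda>x. \<bar>f (- x)\<bar>)" and "lp_norm a (\<lambda>x. \<bar>f (- x)\<bar>) = lp_norm a f"
proof -
  have [measurable]: "f \<in> borel_measurable borel" and I: "integrable lborel (\<lambda>x. \<bar>f x\<bar> powr a)"
    using F by (auto simp: memLp_def)
  note R = refl_int[of "\<lambda>x. \<bar>f x\<bar> powr a", OF _ _ I]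
  show "memLp a (\<lambda>x. \<bar>f (- x)\<bar>)" using R(1) by (simp add: memLp_def)
  show "lp_norm a (\<lambda>x. \<bar>f (- x)\<bar>) = lp_norm a f" using R(2) by (simp add: lp_norm_def)
qed

lemma Phi_meas:
  fixes \<mu> :: "('a::euclidean_space \<times> 'a) measure" and G :: "'a \<Rightarrow> ennreal"
  assumes borel: "sets \<mu> = sets borel" and fin: "finite_measure \<mu>" and [measurable]: "G \<in> borel_measurable borel"
  shows "(\<lambda>w. \<integral>\<^sup>+t. G (w + t) \<partial>push_minus \<mu>) \<in> borel_measurable borel"
    and "\<And>w. (\<integral>\<^sup>+t. G (w + t) \<partial>push_minus \<mu>) = (\<integral>\<^sup>+yz. G (w + (fst yz - snd yz)) \<partial>\<mu>)"
proof -
  interpret finite_measure \<mu> by fact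
  have S: "sets \<mu> = sets (lborel \<Otimes>\<^sub>M (lborel::'a measure))" using sets_mu[OF borel] .
  have md: "(\<lambda>yz. fst yz - snd yz) \<in> \<mu> \<rightarrow>\<^sub>M (lborel::'a measure)"
    by (subst measurable_cong_sets[OF S refl]) measurable
  show e: "\<And>w. (\<integral>\<^sup>+t. G (w + t) \<partial>push_minus \<mu>) = (\<integral>\<^sup>+yz. G (w + (fst yz - snd yz)) \<partial>\<mu>)"
    unfolding push_minus_def by (subst nn_integral_distr[OF md]) auto
  have m: "(\<lambda>(w, yz). G (w + (fst yz - snd yz))) \<in> borel_measurable (borel \<Otimes>\<^sub>M \<mu>)"
    by (subst measurable_cong_sets[OF sets_pair_measure_cong[OF refl S] refl]) measurable
  have "(\<lambda>w. \<integral>\<^sup>+yz. G (w + (fst yz - snd yz)) \<partial>\<mu>) \<in> borel_measurable borel"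
    by (rule borel_measurable_nn_integral) (use m in simp)
  then show "(\<lambda>w. \<integral>\<^sup>+t. G (w + t) \<partial>push_minus \<mu>) \<in> borel_measurable borel" by (simp add: e)
qed

lemma key11:
  fixes \<mu> :: "('a::euclidean_space \<times> 'a) measure"
  assumes borel: "sets \<mu> = sets borel" and fin: "finite_measure \<mu>"
    and dens: "\<exists>h B. h \<in> borel_measurable lborel \<and> (\<forall>t. 0 \<le> h t) \<and>
                 (AE t in lborel. h t \<le> B) \<and>
                 push_minus \<mu> = density lborel (\<lambda>t. ennreal (h t))"
  shows "\<exists>C\<ge>0. \<forall>f g. memLp 1 f \<longrightarrow> memLp 1 g \<longrightarrow>
      (\<integral>\<^sup>+x. (\<integral>\<^sup>+yz. ennreal (\<bar>f (x - fst yz)\<bar> * \<bar>g (x - snd yz)\<bar>) \<partial>\<mu>) \<partial>lborel) \<le> ennreal (C * lp_norm 1 f * lp_norm 1 g)"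
proof -
  obtain h B where hm[measurable]: "h \<in> borel_measurable lborel" and h0: "\<forall>t. 0 \<le> h t"
    and hB: "AE t in lborel. h t \<le> B" and nu: "push_minus \<mu> = density lborel (\<lambda>t. ennreal (h t))"
    using dens by blast
  define B' where "B' = max B 0"
  show ?thesis
  proof (intro exI[of _ B'] conjI allI impI)
    show "0 \<le> B'" by (simp add: B'_def)
    fix f g :: "'a \<Rightarrow> real" assume F: "memLp 1 f" and G: "memLp 1 g"
    have [measurable]: "f \<in> borel_measurable borel" "g \<in> borel_measurable borel"
      and If: "integrable lborel (\<lambda>x. \<bar>f x\<bar>)" and Ig: "integrable lborel (\<lambda>x. \<bar>g x\<bar>)"
      using F G by (auto simp: memLp_def)
    have nf: "lp_norm 1 f = (\<integral>x. \<bar>f x\<bar> \<partial>lborel)" and ng: "lp_norm 1 g = (\<integral>x. \<bar>g x\<bar> \<partial>lborel)"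
      by (simp_all add: lp_norm_def)
    have ef: "(\<integral>\<^sup>+x. ennreal \<bar>f x\<bar> \<partial>lborel) = ennreal (lp_norm 1 f)"
      unfolding nf using If by (intro nn_integral_eq_integral) auto
    have eg: "(\<integral>\<^sup>+x. ennreal \<bar>g x\<bar> \<partial>lborel) = ennreal (lp_norm 1 g)"
      unfolding ng using Ig by (intro nn_integral_eq_integral) auto
    have "(\<integral>\<^sup>+x. (\<integral>\<^sup>+yz. ennreal (\<bar>f (x - fst yz)\<bar> * \<bar>g (x - snd yz)\<bar>) \<partial>\<mu>) \<partial>lborel)
        = (\<integral>\<^sup>+x. (\<integral>\<^sup>+yz. ennreal \<bar>f (x - fst yz)\<bar> * ennreal \<bar>g (x - snd yz)\<bar> \<partial>\<mu>) \<partial>lborel)"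
      by (simp add: ennreal_mult)
    also have "\<dots> = (\<integral>\<^sup>+w. ennreal \<bar>f w\<bar> * (\<integral>\<^sup>+t. ennreal \<bar>g (w + t)\<bar> \<partial>push_minus \<mu>) \<partial>lborel)"
      by (rule shift[OF borel fin]) measurable
    also have "\<dots> \<le> (\<integral>\<^sup>+w. ennreal \<bar>f w\<bar> * (ennreal B' * ennreal (lp_norm 1 g)) \<partial>lborel)"
    proof (intro nn_integral_mono mult_left_mono)
      fix w :: 'a
      have "(\<integral>\<^sup>+t. ennreal \<bar>g (w + t)\<bar> \<partial>push_minus \<mu>) = (\<integral>\<^sup>+t. ennreal (h t) * ennreal \<bar>g (w + t)\<bar> \<partial>lborel)"
        unfolding nu by (subst nn_integral_density) auto
      also have "\<dots> \<le> (\<integral>\<^sup>+t. ennreal B' * ennreal \<bar>g (w + t)\<bar> \<partial>lborel)"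
        using hB by (intro nn_integral_mono_AE) (auto elim!: eventually_mono intro!: mult_right_mono ennreal_leI simp: B'_def)
      also have "\<dots> = ennreal B' * (\<integral>\<^sup>+t. ennreal \<bar>g (w + t)\<bar> \<partial>lborel)"
        by (rule nn_integral_cmult) measurable
      also have "(\<integral>\<^sup>+t. ennreal \<bar>g (w + t)\<bar> \<partial>lborel) = ennreal (lp_norm 1 g)"
        using nn_translate[of "\<lambda>t. ennreal \<bar>g t\<bar>" w] eg by (simp add: add.commute)
      finally show "(\<integral>\<^sup>+t. ennreal \<bar>g (w + t)\<bar> \<partial>push_minus \<mu>) \<le> ennreal B' * ennreal (lp_norm 1 g)" .
    qed simp
    also have "\<dots> = ennreal (lp_norm 1 f) * (ennreal B' * ennreal (lp_norm 1 g))"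
      by (subst nn_integral_multc) (simp_all add: ef)
    also have "\<dots> = ennreal (B' * lp_norm 1 f * lp_norm 1 g)"
      by (simp add: ennreal_mult[symmetric] lp_norm_nonneg B'_def mult_ac)
    finally show "(\<integral>\<^sup>+x. (\<integral>\<^sup>+yz. ennreal (\<bar>f (x - fst yz)\<bar> * \<bar>g (x - snd yz)\<bar>) \<partial>\<mu>) \<partial>lborel) \<le> ennreal (B' * lp_norm 1 f * lp_norm 1 g)" .
  qed
qed

lemma key2:
  fixes \<mu> :: "('a::euclidean_space \<times> 'a) measure"
  assumes borel: "sets \<mu> = sets borel" and fin: "finite_measure \<mu>"
    and q: "1 < q" and lin: "lin_bounded (push_minus \<mu>) p q"
  shows "\<exists>C\<ge>0. \<forall>f g. memLp (q / (q - 1)) f \<longrightarrow> memLp p g \<longrightarrow>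
      (\<integral>\<^sup>+x. (\<integral>\<^sup>+yz. ennreal (\<bar>f (x - fst yz)\<bar> * \<bar>g (x - snd yz)\<bar>) \<partial>\<mu>) \<partial>lborel) \<le> ennreal (C * lp_norm (q / (q - 1)) f * lp_norm p g)"
proof -
  obtain Cl where Cl: "\<And>g. memLp p g \<Longrightarrow> (AE x in lborel. integrable (push_minus \<mu>) (\<lambda>t. g (x - t))) \<and>
      memLp q (T_lin (push_minus \<mu>) g) \<and> lp_norm q (T_lin (push_minus \<mu>) g) \<le> Cl * lp_norm p g"
    using lin unfolding lin_bounded_def by blast
  define C where "C = max Cl 0"
  define a where "a = q / (q - 1)"
  have a1: "1 < a" using q by (simp add: a_def field_simps)
  have aq: "1 / a + 1 / q = 1" using q by (simp add: a_def field_simps)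
  show ?thesis unfolding a_def[symmetric]
  proof (intro exI[of _ C] conjI allI impI)
    show "0 \<le> C" by (simp add: C_def)
    fix f g :: "'a \<Rightarrow> real" assume F: "memLp a f" and G: "memLp p g"
    have [measurable]: "f \<in> borel_measurable borel" "g \<in> borel_measurable borel"
      using F G by (auto simp: memLp_def)
    define gt where "gt x = \<bar>g (- x)\<bar>" for x
    have Gt: "memLp p gt" and ngt: "lp_norm p gt = lp_norm p g"
      using memLp_refl[OF G] by (simp_all add: gt_def[abs_def])
    define T where "T = T_lin (push_minus \<mu>) gt"
    have AEi: "AE x in lborel. integrable (push_minus \<mu>) (\<lambda>t. gt (x - t))" and MT: "memLp q T"
      and nT: "lp_norm q T \<le> Cl * lp_norm p g"
      using Cl[OF Gt] by (auto simp: T_def ngt)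
    have T0: "0 \<le> T x" for x unfolding T_def T_lin_def gt_def
      by (intro Bochner_Integration.integral_nonneg) auto
    have Fr: "memLp a (\<lambda>x. \<bar>f (- x)\<bar>)" and nFr: "lp_norm a (\<lambda>x. \<bar>f (- x)\<bar>) = lp_norm a f"
      using memLp_refl[OF F] by auto
    define Phi where "Phi w = (\<integral>\<^sup>+t. ennreal \<bar>g (w + t)\<bar> \<partial>push_minus \<mu>)" for w
    have Phim[measurable]: "Phi \<in> borel_measurable borel"
      unfolding Phi_def[abs_def] by (rule Phi_meas(1)[OF borel fin]) measurable
    have "(\<integral>\<^sup>+x. (\<integral>\<^sup>+yz. ennreal (\<bar>f (x - fst yz)\<bar> * \<bar>g (x - snd yz)\<bar>) \<partial>\<mu>) \<partial>lborel)
        = (\<integral>\<^sup>+x. (\<integral>\<^sup>+yz. ennreal \<bar>f (x - fst yz)\<bar> * ennreal \<bar>g (x - snd yz)\<bar> \<partial>\<mu>) \<partial>lborel)"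
      by (simp add: ennreal_mult)
    also have "\<dots> = (\<integral>\<^sup>+w. ennreal \<bar>f w\<bar> * Phi w \<partial>lborel)"
      unfolding Phi_def by (rule shift[OF borel fin]) measurable
    also have "\<dots> = (\<integral>\<^sup>+x. ennreal \<bar>f (0 - x)\<bar> * Phi (0 - x) \<partial>lborel)"
      by (rule nn_reflect[symmetric]) measurable
    also have "\<dots> = (\<integral>\<^sup>+x. ennreal (\<bar>f (- x)\<bar> * T x) \<partial>lborel)"
    proof (rule nn_integral_cong_AE)
      show "AE x in lborel. ennreal \<bar>f (0 - x)\<bar> * Phi (0 - x) = ennreal (\<bar>f (- x)\<bar> * T x)"
        using AEi
      proof eventually_elim
        case (elim x)
        have "Phi (0 - x) = (\<integral>\<^sup>+t. ennreal (gt (x - t)) \<partial>push_minus \<mu>)"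
          unfolding Phi_def gt_def by (simp add: algebra_simps)
        also have "\<dots> = ennreal (T x)" unfolding T_def T_lin_def
          using elim by (intro nn_integral_eq_integral) (auto simp: gt_def)
        finally show ?case using T0 by (simp add: ennreal_mult)
      qed
    qed
    also have "\<dots> \<le> ennreal (lp_norm a (\<lambda>x. \<bar>f (- x)\<bar>) * lp_norm q T)"
      by (rule holder_nn[OF a1 q aq Fr MT]) (simp_all add: T0)
    also have "\<dots> \<le> ennreal (C * lp_norm a f * lp_norm p g)"
    proof (rule ennreal_leI)
      have "lp_norm q T \<le> C * lp_norm p g"
        using nT by (rule order_trans) (intro mult_right_mono, auto simp: C_def lp_norm_nonneg)
      then show "lp_norm a (\<lambda>x. \<bar>f (- x)\<bar>) * lp_norm q T \<le> C * lp_norm a f * lp_norm p g"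
        unfolding nFr by (metis mult.assoc mult.commute mult_left_mono lp_norm_nonneg)
    qed
    finally show "(\<integral>\<^sup>+x. (\<integral>\<^sup>+yz. ennreal (\<bar>f (x - fst yz)\<bar> * \<bar>g (x - snd yz)\<bar>) \<partial>\<mu>) \<partial>lborel) \<le> ennreal (C * lp_norm a f * lp_norm p g)" .
  qed
qed


theorem mainTheorem5:
  fixes \<mu> :: "('a::euclidean_space \<times> 'a) measure"
  assumes borel: "sets \<mu> = sets borel"
    and fin: "finite_measure \<mu>"
    and cpt: "\<exists>K. compact K \<and> emeasure \<mu> (UNIV - K) = 0"
    and dens: "\<exists>h B. h \<in> borel_measurable lborel \<and> (\<forall>t. 0 \<le> h t) \<and>
                 (AE t in lborel. h t \<le> B) \<and>
                 push_minus \<mu> = density lborel (\<lambda>t. ennreal (h t))"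
  shows "(bil_bounded \<mu> 1 1 1 \<and> (\<forall>s\<in>{1/2..1}. bil_bounded \<mu> 1 1 s)) \<and>
         (\<forall>p q. 1 \<le> p \<longrightarrow> p < q \<longrightarrow> lin_bounded (push_minus \<mu>) p q \<longrightarrow>
           bil_bounded \<mu> (q / (q - 1)) p 1 \<and>
           (\<forall>s\<in>{p * (q / (q - 1)) / (p + q / (q - 1)) .. 1}. bil_bounded \<mu> (q / (q - 1)) p s))"
proof -
  obtain C1 where C1: "0 \<le> C1" "\<forall>f g. memLp 1 f \<longrightarrow> memLp 1 g \<longrightarrow>
      (\<integral>\<^sup>+x. (\<integral>\<^sup>+yz. ennreal (\<bar>f (x - fst yz)\<bar> * \<bar>g (x - snd yz)\<bar>) \<partial>\<mu>) \<partial>lborel) \<le> ennreal (C1 * lp_norm 1 f * lp_norm 1 g)"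
    using key11[OF borel fin dens] by blast
  have k1: "\<And>f g. memLp 1 f \<Longrightarrow> memLp 1 g \<Longrightarrow>
      (\<integral>\<^sup>+x. (\<integral>\<^sup>+yz. ennreal (\<bar>f (x - fst yz)\<bar> * \<bar>g (x - snd yz)\<bar>) \<partial>\<mu>) \<partial>lborel) \<le> ennreal (C1 * lp_norm 1 f * lp_norm 1 g)"
    using C1(2) by blast
  have B11: "bil_bounded \<mu> 1 1 1" by (rule bb1[OF borel fin C1(1) k1])
  have Bs: "\<forall>s\<in>{1/2..1}. bil_bounded \<mu> 1 1 s"
  proof
    fix s :: real assume s: "s \<in> {1/2..1}"
    show "bil_bounded \<mu> 1 1 s"
    proof (cases "s = 1")
      case True then show ?thesis using B11 by simp
    next
      case False
      then show ?thesis using s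
        by (intro bbs[OF borel fin cpt _ _ C1(1) k1]) auto
    qed
  qed
  have P2: "\<forall>p q. 1 \<le> p \<longrightarrow> p < q \<longrightarrow> lin_bounded (push_minus \<mu>) p q \<longrightarrow>
           bil_bounded \<mu> (q / (q - 1)) p 1 \<and>
           (\<forall>s\<in>{p * (q / (q - 1)) / (p + q / (q - 1)) .. 1}. bil_bounded \<mu> (q / (q - 1)) p s)"
  proof (intro allI impI)
    fix p q :: real assume p: "1 \<le> p" and pq: "p < q" and lin: "lin_bounded (push_minus \<mu>) p q"
    have q: "1 < q" using p pq by simp
    obtain C2 where C2: "0 \<le> C2" "\<forall>f g. memLp (q / (q - 1)) f \<longrightarrow> memLp p g \<longrightarrow>
      (\<integral>\<^sup>+x. (\<integral>\<^sup>+yz. ennreal (\<bar>f (x - fst yz)\<bar> * \<bar>g (x - snd yz)\<bar>) \<partial>\<mu>) \<partial>lborel) \<le> ennreal (C2 * lp_norm (q / (q - 1)) f * lp_norm p g)"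
      using key2[OF borel fin q lin] by blast
    have k2: "\<And>f g. memLp (q / (q - 1)) f \<Longrightarrow> memLp p g \<Longrightarrow>
      (\<integral>\<^sup>+x. (\<integral>\<^sup>+yz. ennreal (\<bar>f (x - fst yz)\<bar> * \<bar>g (x - snd yz)\<bar>) \<partial>\<mu>) \<partial>lborel) \<le> ennreal (C2 * lp_norm (q / (q - 1)) f * lp_norm p g)"
      using C2(2) by blast
    have a1: "1 \<le> q / (q - 1)" using q by (simp add: field_simps)
    have a0: "0 < q / (q - 1)" using q by simp
    have B1: "bil_bounded \<mu> (q / (q - 1)) p 1" by (rule bb1[OF borel fin C2(1) k2])
    moreover have "\<forall>s\<in>{p * (q / (q - 1)) / (p + q / (q - 1)) .. 1}. bil_bounded \<mu> (q / (q - 1)) p s"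
    proof
      fix s assume s: "s \<in> {p * (q / (q - 1)) / (p + q / (q - 1)) .. 1}"
      show "bil_bounded \<mu> (q / (q - 1)) p s"
      proof (cases "s = 1")
        case True then show ?thesis using B1 by simp
      next
        case False
        define a where "a = q / (q - 1)"
        have a0': "0 < a" and pp: "0 < p" using a0 p by (auto simp: a_def)
        have sl: "p * a / (p + a) \<le> s" and s1: "s < 1" using s False by (auto simp: a_def)
        have pos: "0 < p * a / (p + a)" using a0' pp by simp
        have "p * a \<le> s * (p + a)" using sl a0' pp by (simp add: field_simps)
        then have sab: "1 \<le> s / a + s / p" using a0' pp by (simp add: field_simps)
        show ?thesis
          by (rule bbs[OF borel fin cpt a1 p C2(1) k2]) (use pos sl s1 sab in \<open>auto simp: a_def\<close>)
      qed
    qed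
    ultimately show "bil_bounded \<mu> (q / (q - 1)) p 1 \<and>
           (\<forall>s\<in>{p * (q / (q - 1)) / (p + q / (q - 1)) .. 1}. bil_bounded \<mu> (q / (q - 1)) p s)" by blast
  qed
  show ?thesis using B11 Bs P2 by blast
qed

end
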